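(* For every integer $n\ge 3$ there exist a boolean classifier $\kappa:\{0,1\}^n\to\{0,1\}$ and a point $\mathbf v\in\{0,1\}^n$ such that, for the explanation problem with sample $(\mathbf v,\kappa(\mathbf v))$, some feature $i\in\mathcal F=\{1,\dots,n\}$ is irrelevant and $\mathrm{Sv}(i)\neq 0$ (issue I1).
   Context: Let $\mathcal F=\{1,\dots,n\}$. A boolean classifier is a non-constant function $\kappa:\{0,1\}^n\to\{0,1\}$; a sample is a pair $(\mathbf v,c)$ with $\mathbf v\in\{0,1\}^n$ and $c=\kappa(\mathbf v)$. For $\mathcal S\subseteq\mathcal F$ let $\Upsilon(\mathcal S;\mathbf v)=\{\mathbf x\in\{0,1\}^n : x_j=v_j \text{ for all } j\in\mathcal S\}$ and, for any function $g$ on $\{0,1\}^n$, $\mathbf E[g\mid \mathbf x_{\mathcal S}=\mathbf v_{\mathcal S}]=|\Upsilon(\mathcal S;\mathbf v)|^{-1}\sum_{\mathbf x\in\Upsilon(\mathcal S;\mathbf v)}g(\mathbf x)$ (uniform distribution, independent features). The characteristic function is $\upsilon(\mathcal S)=\mathbf E[\kappa\mid\mathbf x_{\mathcal S}=\mathbf v_{\mathcal S}]$, and the SHAP score of feature $i$ is $\mathrm{Sv}(i)=\sum_{\mathcal S\subseteq\mathcal F\setminus\{i\}}\frac{|\mathcal S|!\,(n-|\mathcal S|-1)!}{n!}\big(\upsilon(\mathcal S\cup\{i\})-\upsilon(\mathcal S)\big)$. The similarity predicate is $\sigma(\mathbf x)=1$ if $\kappa(\mathbf x)=\kappa(\mathbf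 v)$ and $0$ otherwise. A set $\mathcal S\subseteq\mathcal F$ is a weak abductive explanation (WAXp) if $\mathbf E[\sigma\mid\mathbf x_{\mathcal S}=\mathbf v_{\mathcal S}]=1$ (i.e. $\kappa(\mathbf x)=\kappa(\mathbf v)$ for all $\mathbf x\in\Upsilon(\mathcal S;\mathbf v)$); an abductive explanation (AXp) is a WAXp $\mathcal S$ such that $\mathcal S\setminus\{t\}$ is not a WAXp for every $t\in\mathcal S$. A feature is relevant if it belongs to at least one AXp, and irrelevant otherwise. *)

theory Defs
  imports "HOL-Analysis.Analysis"
begin

text \<open>A point of \<open>{0,1}^n\<close> is a function \<open>nat \<Rightarrow> bool\<close>
  (True = 1) that is False (canonically 0) outside \<open>{1..n}\<close>.\<close>

definition points :: "nat \<Rightarrow> (nat \<Rightarrow> bool) set" where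
  "points n = {x. \<forall>j. j \<notin> {1..n} \<longrightarrow> x j = False}"

definition feats :: "nat \<Rightarrow> nat set" where
  "feats n = {1..n}"

definition is_classifier :: "nat \<Rightarrow> ((nat \<Rightarrow> bool) \<Rightarrow> bool) \<Rightarrow> bool" where
  "is_classifier n \<kappa> \<longleftrightarrow> (\<exists>x\<in>points n. \<exists>y\<in>points n. \<kappa> x \<noteq> \<kappa> y)"

definition Upsilon :: "nat \<Rightarrow> nat set \<Rightarrow> (nat \<Rightarrow> bool) \<Rightarrow> (nat \<Rightarrow> bool) set" where
  "Upsilon n S v = {x \<in> points n. \<forall>j\<in>S. x j = v j}"

definition cond_exp :: "nat \<Rightarrow> ((nat \<Rightarrow> bool) \<Rightarrow> real) \<Rightarrow> nat set \<Rightarrow> (nat \<Rightarrow> bool) \<Rightarrow> real" where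
  "cond_exp n g S v = (\<Sum>x\<in>Upsilon n S v. g x) / real (card (Upsilon n S v))"

definition charfun :: "nat \<Rightarrow> ((nat \<Rightarrow> bool) \<Rightarrow> bool) \<Rightarrow> (nat \<Rightarrow> bool) \<Rightarrow> nat set \<Rightarrow> real" where
  "charfun n \<kappa> v S = cond_exp n (\<lambda>x. if \<kappa> x then 1 else 0) S v"

definition shap :: "nat \<Rightarrow> ((nat \<Rightarrow> bool) \<Rightarrow> bool) \<Rightarrow> (nat \<Rightarrow> bool) \<Rightarrow> nat \<Rightarrow> real" where
  "shap n \<kappa> v i = (\<Sum>S\<in>Pow (feats n - {i}).
      (fact (card S) * fact (n - card S - 1) / fact n) *
      (charfun n \<kappa> v (S \<union> {i}) - charfun n \<kappa> v S))"

definition similar :: "((nat \<Rightarrow> bool) \<Rightarrow> bool) \<Rightarrow> (nat \<Rightarrow> bool) \<Rightarrow> (nat \<Rightarrow> bool) \<Rightarrow> real" where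
  "similar \<kappa> v x = (if \<kappa> x = \<kappa> v then 1 else 0)"

definition WAXp :: "nat \<Rightarrow> ((nat \<Rightarrow> bool) \<Rightarrow> bool) \<Rightarrow> (nat \<Rightarrow> bool) \<Rightarrow> nat set \<Rightarrow> bool" where
  "WAXp n \<kappa> v S \<longleftrightarrow> S \<subseteq> feats n \<and> cond_exp n (similar \<kappa> v) S v = 1"

definition AXp :: "nat \<Rightarrow> ((nat \<Rightarrow> bool) \<Rightarrow> bool) \<Rightarrow> (nat \<Rightarrow> bool) \<Rightarrow> nat set \<Rightarrow> bool" where
  "AXp n \<kappa> v S \<longleftrightarrow> WAXp n \<kappa> v S \<and> (\<forall>t\<in>S. \<not> WAXp n \<kappa> v (S - {t}))"

definition relevant :: "nat \<Rightarrow> ((nat \<Rightarrow> bool) \<Rightarrow> bool) \<Rightarrow> (nat \<Rightarrow> bool) \<Rightarrow> nat \<Rightarrow> bool" where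
  "relevant n \<kappa> v i \<longleftrightarrow> (\<exists>S. AXp n \<kappa> v S \<and> i \<in> S)"

definition irrelevant :: "nat \<Rightarrow> ((nat \<Rightarrow> bool) \<Rightarrow> bool) \<Rightarrow> (nat \<Rightarrow> bool) \<Rightarrow> nat \<Rightarrow> bool" where
  "irrelevant n \<kappa> v i \<longleftrightarrow> \<not> relevant n \<kappa> v i"

end

theory Submission
  imports Defs
begin

lemma points_eq: "points n = (\<lambda>A j. j \<in> A) ` Pow {1..n}"
proof
  show "points n \<subseteq> (\<lambda>A j. j \<in> A) ` Pow {1..n}"
  proof
    fix x assume x: "x \<in> points n"
    have "x = (\<lambda>j. j \<in> {j\<in>{1..n}. x j})" using x by (auto simp: points_def)
    thus "x \<in> (\<lambda>A j. j \<in> A) ` Pow {1..n}" by blast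
  qed
qed (auto simp: points_def)

lemma finite_points: "finite (points n)"
  by (simp add: points_eq)

lemma finite_Ups: "finite (Upsilon n S v)"
  unfolding Upsilon_def using finite_points by auto

lemma v_in_Ups: "v \<in> points n \<Longrightarrow> v \<in> Upsilon n S v"
  by (simp add: Upsilon_def)

lemma WAXp_iff:
  assumes "v \<in> points n"
  shows "WAXp n \<kappa> v S \<longleftrightarrow> S \<subseteq> feats n \<and> (\<forall>x\<in>Upsilon n S v. \<kappa> x = \<kappa> v)"
proof -
  let ?U = "Upsilon n S v"
  have fin: "finite ?U" by (rule finite_Ups)
  have vU: "v \<in> ?U" using assms by (rule v_in_Ups)
  have cpos: "card ?U > 0" using fin vU card_gt_0_iff by blast
  have "cond_exp n (similar \<kappa> v) S v = 1 \<longleftrightarrow> (\<forall>x\<in>?U. \<kappa> x = \<kappa> v)"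
  proof
    assume all: "\<forall>x\<in>?U. \<kappa> x = \<kappa> v"
    have "(\<Sum>x\<in>?U. similar \<kappa> v x) = (\<Sum>x\<in>?U. 1)"
      using all by (auto simp: similar_def intro!: sum.cong)
    thus "cond_exp n (similar \<kappa> v) S v = 1" using cpos by (simp add: cond_exp_def)
  next
    assume c: "cond_exp n (similar \<kappa> v) S v = 1"
    show "\<forall>x\<in>?U. \<kappa> x = \<kappa> v"
    proof (rule ccontr)
      assume "\<not> (\<forall>x\<in>?U. \<kappa> x = \<kappa> v)"
      then obtain x where x: "x \<in> ?U" "\<kappa> x \<noteq> \<kappa> v" by blast
      have "(\<Sum>y\<in>?U. similar \<kappa> v y) = (\<Sum>y\<in>?U - {x}. similar \<kappa> v y) + similar \<kappa> v x"
        using fin x(1) by (simp add: sum.remove add.commute)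
      also have "\<dots> = (\<Sum>y\<in>?U - {x}. similar \<kappa> v y)" using x(2) by (simp add: similar_def)
      also have "\<dots> \<le> (\<Sum>y\<in>?U - {x}. 1)"
        by (rule sum_mono) (simp add: similar_def)
      also have "\<dots> = real (card ?U) - 1" using fin x(1) cpos by (simp add: of_nat_diff Suc_leI)
      finally have "(\<Sum>y\<in>?U. similar \<kappa> v y) < real (card ?U)" by simp
      hence "cond_exp n (similar \<kappa> v) S v < 1" using cpos by (simp add: cond_exp_def)
      thus False using c by simp
    qed
  qed
  thus ?thesis unfolding WAXp_def by blast
qed

definition kap :: "(nat \<Rightarrow> bool) \<Rightarrow> bool" where
  "kap x \<longleftrightarrow> \<not> x 1 \<and> \<not> x 2 \<and> \<not> x 3"

definition vv :: "nat \<Rightarrow> bool" where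
  "vv j \<longleftrightarrow> j = 2 \<or> j = 3"

lemma vv_points: "n \<ge> 3 \<Longrightarrow> vv \<in> points n"
  by (auto simp: points_def vv_def)

lemma zero_points: "(\<lambda>_. False) \<in> points n"
  by (auto simp: points_def)

lemma z_points: "n \<ge> 3 \<Longrightarrow> vv(2 := False, 3 := False) \<in> points n"
  by (auto simp: points_def vv_def)

lemma sum_eq:
  assumes "1 \<notin> S"
  shows "(\<Sum>x\<in>Upsilon n S vv. (if kap x then 1 else 0::real))
       = (\<Sum>x\<in>Upsilon n (S \<union> {1}) vv. (if kap x then 1 else 0))"
proof -
  have sub: "Upsilon n (S \<union> {1}) vv \<subseteq> Upsilon n S vv" by (auto simp: Upsilon_def)
  have "(\<Sum>x\<in>Upsilon n S vv. (if kap x then 1 else 0::real))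
     = (\<Sum>x\<in>Upsilon n (S \<union> {1}) vv. (if kap x then 1 else 0))"
    by (rule sum.mono_neutral_right[OF finite_Ups sub])
       (auto simp: Upsilon_def kap_def vv_def)
  thus ?thesis .
qed

lemma card_eq:
  assumes "1 \<notin> S" "n \<ge> 3"
  shows "card (Upsilon n S vv) = 2 * card (Upsilon n (S \<union> {1}) vv)"
proof -
  let ?U0 = "Upsilon n (S \<union> {1}) vv"
  let ?U1 = "{x\<in>Upsilon n S vv. x 1}"
  have split: "Upsilon n S vv = ?U0 \<union> ?U1"
    by (auto simp: Upsilon_def vv_def)
  have disj: "?U0 \<inter> ?U1 = {}" by (auto simp: Upsilon_def vv_def)
  have bij: "bij_betw (\<lambda>x. x(1 := True)) ?U0 ?U1"
  proof (rule bij_betw_imageI)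
    show "inj_on (\<lambda>x. x(1 := True)) ?U0"
    proof (rule inj_onI)
      fix x y assume "x \<in> ?U0" "y \<in> ?U0" "x(1 := True) = y(1 := True)"
      hence h: "\<forall>j. j \<noteq> 1 \<longrightarrow> x j = y j" by (metis fun_upd_other)
      have "x 1 = y 1" using \<open>x \<in> ?U0\<close> \<open>y \<in> ?U0\<close> by (auto simp: Upsilon_def vv_def)
      thus "x = y" using h by (intro ext) metis
    qed
    show "(\<lambda>x. x(1 := True)) ` ?U0 = ?U1"
    proof
      show "(\<lambda>x. x(1 := True)) ` ?U0 \<subseteq> ?U1"
      proof (rule image_subsetI)
        fix x assume x: "x \<in> ?U0"
        hence "x \<in> points n" "\<forall>j\<in>S. x j = vv j" by (auto simp: Upsilon_def)
        hence "x(1 := True) \<in> points n" "\<forall>j\<in>S. (x(1 := True)) j = vv j"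
        proof -
          assume p: "x \<in> points n" and e: "\<forall>j\<in>S. x j = vv j"
          show "x(1 := True) \<in> points n" using p assms(2) unfolding points_def by auto
          show "\<forall>j\<in>S. (x(1 := True)) j = vv j" 
          proof
            fix j assume "j \<in> S"
            hence "j \<noteq> 1" using assms(1) by blast
            thus "(x(1 := True)) j = vv j" using e \<open>j \<in> S\<close> by simp
          qed
        qed
        thus "x(1 := True) \<in> ?U1" unfolding Upsilon_def by simp
      qed
      show "?U1 \<subseteq> (\<lambda>x. x(1 := True)) ` ?U0"
      proof
        fix x assume x: "x \<in> ?U1"
        have "x(1 := False) \<in> ?U0" using x assms by (auto simp: Upsilon_def points_def vv_def)
        moreover have "x = (x(1 := False))(1 := True)" using x by (auto simp: fun_eq_iff)
        ultimately show "x \<in> (\<lambda>x. x(1 := True)) ` ?U0" by blast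
      qed
    qed
  qed
  have f0: "finite ?U0" "finite ?U1" using finite_Ups[of n] by auto
  have "card (Upsilon n S vv) = card (?U0 \<union> ?U1)" using split by (rule arg_cong)
  also have "\<dots> = card ?U0 + card ?U1" by (rule card_Un_disjoint[OF f0 disj])
  also have "card ?U1 = card ?U0" using bij_betw_same_card[OF bij] by (rule sym)
  finally show ?thesis by simp
qed

lemma charfun_rel:
  assumes "1 \<notin> S" "n \<ge> 3"
  shows "charfun n kap vv S = charfun n kap vv (S \<union> {1}) / 2"
  using sum_eq[OF assms(1), of n] card_eq[OF assms]
  by (simp add: charfun_def cond_exp_def)

lemma charfun_nonneg: "charfun n kap vv S \<ge> 0"
  by (auto simp: charfun_def cond_exp_def intro!: divide_nonneg_nonneg sum_nonneg)

lemma charfun_pos: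
  assumes "n \<ge> 3"
  shows "charfun n kap vv {1} > 0"
proof -
  let ?z = "vv(2 := False, 3 := False)"
  have zU: "?z \<in> Upsilon n {1} vv" using z_points[OF assms] by (auto simp: Upsilon_def vv_def)
  have kz: "kap ?z" by (simp add: kap_def vv_def)
  have "0 < (\<Sum>x\<in>Upsilon n {1} vv. (if kap x then 1 else 0::real))"
    by (rule sum_pos2[OF finite_Ups zU]) (auto simp: kz)
  moreover have "card (Upsilon n {1} vv) > 0" using finite_Ups zU card_gt_0_iff by blast
  ultimately show ?thesis by (simp add: charfun_def cond_exp_def)
qed

theorem proposition1:
  fixes n :: nat
  assumes "n \<ge> 3"
  shows "\<exists>\<kappa> v. is_classifier n \<kappa> \<and> v \<in> points n \<and>
           (\<exists>i\<in>feats n. irrelevant n \<kappa> v i \<and> shap n \<kappa> v i \<noteq> 0)"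
proof (intro exI conjI bexI)
  have vp: "vv \<in> points n" using vv_points[OF assms] .
  show "is_classifier n kap"
    unfolding is_classifier_def
    using vp zero_points by (intro bexI[of _ "\<lambda>_. False"] bexI[of _ vv]) (auto simp: kap_def vv_def)
  show "vv \<in> points n" by (rule vp)
  show "1 \<in> feats n" using assms by (simp add: feats_def)
  have kv: "\<not> kap vv" by (simp add: kap_def vv_def)
  show "irrelevant n kap vv 1"
    unfolding irrelevant_def relevant_def AXp_def
  proof clarify
    fix S assume W: "WAXp n kap vv S" and 1: "1 \<in> S"
      and nW: "\<forall>t\<in>S. \<not> WAXp n kap vv (S - {t})"
    have Sf: "S \<subseteq> feats n" and all: "\<forall>x\<in>Upsilon n S vv. kap x = kap vv"
      using W WAXp_iff[OF vp] by auto
    have "2 \<in> S \<or> 3 \<in> S"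
    proof (rule ccontr)
      assume "\<not> (2 \<in> S \<or> 3 \<in> S)"
      hence "vv(2 := False, 3 := False) \<in> Upsilon n S vv"
        using z_points[OF assms] by (auto simp: Upsilon_def)
      with all kv show False by (auto simp: kap_def vv_def)
    qed
    hence "\<forall>x\<in>Upsilon n (S - {1}) vv. kap x = kap vv"
      using kv by (auto simp: Upsilon_def kap_def vv_def)
    hence "WAXp n kap vv (S - {1})" using WAXp_iff[OF vp] Sf by auto
    with nW 1 show False by blast
  qed
  let ?w = "\<lambda>S::nat set. (fact (card S) * fact (n - card S - 1) / fact n :: real)"
  let ?f = "\<lambda>S. ?w S * (charfun n kap vv (S \<union> {1}) - charfun n kap vv S)"
  have wpos: "\<And>S. ?w S > 0" by simp
  have nn: "\<forall>S\<in>Pow (feats n - {1}). 0 \<le> ?f S"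
  proof
    fix S assume "S \<in> Pow (feats n - {1})"
    hence "1 \<notin> S" by auto
    hence "charfun n kap vv (S \<union> {1}) - charfun n kap vv S = charfun n kap vv (S \<union> {1}) / 2"
      using charfun_rel[OF _ assms] by simp
    thus "0 \<le> ?f S" using charfun_nonneg[of n "S \<union> {1}"] wpos[of S] by simp
  qed
  have p0: "0 < ?f {}"
    using charfun_rel[of "{}", OF _ assms] charfun_pos[OF assms] wpos[of "{}"] by simp
  have "0 < (\<Sum>S\<in>Pow (feats n - {1}). ?f S)"
    by (rule sum_pos2[of _ "{}"]) (use nn p0 in \<open>auto simp: feats_def\<close>)
  thus "shap n kap vv 1 \<noteq> 0" unfolding shap_def by simp
qed

end
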